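(* Let $n\ge 2$ and let $g_1,\dots,g_r\in\mathbb R[X_1,\dots,X_n]$ satisfy $\|g_i\|\le\tfrac12$ for all $i$ and $1-\|\mathbf X\|_2^2\in\mathcal Q_{\ell_0}(\mathbf g)$ for some $\ell_0\in\mathbb N$. Let $\mathfrak c\ge1,\textit{Ł}\ge1$ satisfy $D(x)^{\textit{Ł}}\le \mathfrak c\,G(x)$ on $[-1,1]^n$, and let $\gamma(n,\mathbf g)\ge 1$ be a constant depending only on $n,\mathbf g$ such that every $f\in\mathbb R[\mathbf X]$ with $f^*>0$ lies in $\mathcal Q_\ell(\mathbf g)$ whenever $\ell\ge\gamma(n,\mathbf g)\,d(f)^{3.5n\textit{Ł}}\epsilon(f)^{-2.5n\textit{Ł}}$. Let $0<\epsilon\le\tfrac12$, $t\in\mathbb N$, $t\ge1$, and $\ell\in\mathbb N$ with $$\ell\ge \gamma(n,\mathbf g)\,6^{2.5n\textit{Ł}}\,t^{6n\textit{Ł}}\binom{n+t}{t}^{2.5n\textit{Ł}}\epsilon^{-2.5n\textit{Ł}}\quad\text{and}\quad \ell\ge 2t+\ell_0 .$$ Then $d_H\big(\mathcal M^{(1)}(S)^{[2t]},\ \mathcal L^{(1)}_\ell(\mathbf g)^{[2t]}\big)\le\epsilon$.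
   Context: $\mathbb R[\mathbf X]=\mathbb R[X_1,\dots,X_n]$, $\Sigma^2$ sums of squares, $S=\{x: g_i(x)\ge0\ \forall i\}$ (nonempty), $\mathcal Q_\ell(\mathbf g)=\{s_0+\sum_i s_ig_i: s_j\in\Sigma^2,\deg s_0\le\ell,\deg(s_ig_i)\le\ell\}$, $\|h\|=\max_{[-1,1]^n}|h|$, $\|\mathbf X\|_2^2=\sum X_i^2$, $d(f)=\deg f$, $f^*=\min_S f$, $\epsilon(f)=f^*/\|f\|$, $G(x)=|\min\{g_1(x),\dots,g_r(x),0\}|$, $D(x)=\operatorname{dist}(x,S)$. A linear functional $L$ on $\mathbb R[\mathbf X]_k$ (polynomials of degree $\le k$) is identified with its vector $(L(\mathbf X^\alpha))_{|\alpha|\le k}$, and distances are Euclidean distances between these vectors; $L^{[2t]}$ is the restriction to $\mathbb R[\mathbf X]_{2t}$. $\mathcal M^{(1)}(S)^{[2t]}=\{(\int \mathbf x^\alpha d\mu)_{|\alpha|\le 2t}: \mu$ a Borel probability measure supported on $S\}$. $\mathcal L^{(1)}_\ell(\mathbf g)=\{L\in(\mathbb R[\mathbf X]_\ell)^*: L(q)\ge0\ \forall q\in\mathcal Q_\ell(\mathbf g),\ L(1)=1\}$ and $\mathcal L^{(1)}_\ell(\mathbf g)^{[2t]}$ is the set of restrictions to $\mathbb R[\mathbf X]_{2t}$. $d_H(A,B)=\max\{\sup_{a\in A}\operatorname{dist}(a,B),\sup_{b\in B}\operatorname{dist}(b,A)\}$ is the Hausdorff distance. *)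

theory Defs
  imports "HOL-Probability.Probability" "HOL-Library.Poly_Mapping"
begin

text \<open>Real polynomials in the variables indexed by the finite type 'n (n = CARD('n)):
  finitely supported maps from exponent vectors to coefficients,
  with convolution product (the Poly_Mapping semiring structure).\<close>

type_synonym 'n rpoly = "('n \<Rightarrow>\<^sub>0 nat) \<Rightarrow>\<^sub>0 real"

definition mdeg :: "('n::finite \<Rightarrow>\<^sub>0 nat) \<Rightarrow> nat" where
  "mdeg \<alpha> = (\<Sum>i\<in>UNIV. Poly_Mapping.lookup \<alpha> i)"

definition pdeg :: "'n::finite rpoly \<Rightarrow> nat" where
  "pdeg p = Max (insert 0 (mdeg ` Poly_Mapping.keys p))"

definition mon_eval :: "('n::finite \<Rightarrow>\<^sub>0 nat) \<Rightarrow> real^'n \<Rightarrow> real" where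
  "mon_eval \<alpha> x = (\<Prod>i\<in>UNIV. (x $ i) ^ Poly_Mapping.lookup \<alpha> i)"

definition peval :: "'n::finite rpoly \<Rightarrow> real^'n \<Rightarrow> real" where
  "peval p x = (\<Sum>\<alpha>\<in>Poly_Mapping.keys p. Poly_Mapping.lookup p \<alpha> * mon_eval \<alpha> x)"

definition is_sos :: "'n::finite rpoly \<Rightarrow> bool" where
  "is_sos s \<longleftrightarrow> (\<exists>qs :: 'n rpoly list. s = sum_list (map (\<lambda>q. q * q) qs))"

definition quadmod :: "nat \<Rightarrow> 'n::finite rpoly list \<Rightarrow> 'n rpoly set" where
  "quadmod l gs = {s0 + (\<Sum>i<length gs. s i * gs ! i) | s0 s.
      is_sos s0 \<and> pdeg s0 \<le> l \<and>
      (\<forall>i<length gs. is_sos (s i) \<and> pdeg (s i * gs ! i) \<le> l)}"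

definition semialg :: "'n::finite rpoly list \<Rightarrow> (real^'n) set" where
  "semialg gs = {x. \<forall>g\<in>set gs. peval g x \<ge> 0}"

definition cube :: "(real^'n::finite) set" where
  "cube = {x. \<forall>i. \<bar>x $ i\<bar> \<le> 1}"

definition supnorm :: "'n::finite rpoly \<Rightarrow> real" where
  "supnorm h = (SUP x\<in>cube. \<bar>peval h x\<bar>)"

definition sqnormX :: "'n::finite rpoly" where
  "sqnormX = (\<Sum>i\<in>UNIV. Poly_Mapping.single (Poly_Mapping.single i 2) 1)"

definition Gfun :: "'n::finite rpoly list \<Rightarrow> real^'n \<Rightarrow> real" where
  "Gfun gs x = \<bar>Min (insert 0 ((\<lambda>g. peval g x) ` set gs))\<bar>"

definition Dfun :: "'n::finite rpoly list \<Rightarrow> real^'n \<Rightarrow> real" where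
  "Dfun gs x = infdist x (semialg gs)"

definition fstar :: "'n::finite rpoly list \<Rightarrow> 'n rpoly \<Rightarrow> real" where
  "fstar gs f = (INF x\<in>semialg gs. peval f x)"

definition epsf :: "'n::finite rpoly list \<Rightarrow> 'n rpoly \<Rightarrow> real" where
  "epsf gs f = fstar gs f / supnorm f"

text \<open>Linear functionals / moment vectors are identified with coefficient vectors
  indexed by exponents; they are taken to vanish outside the relevant degree range.\<close>

definition idx :: "nat \<Rightarrow> ('n::finite \<Rightarrow>\<^sub>0 nat) set" where
  "idx k = {\<alpha>. mdeg \<alpha> \<le> k}"

definition truncv :: "nat \<Rightarrow> (('n::finite \<Rightarrow>\<^sub>0 nat) \<Rightarrow> real) \<Rightarrow> ('n \<Rightarrow>\<^sub>0 nat) \<Rightarrow> real" where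
  "truncv k L = (\<lambda>\<alpha>. if mdeg \<alpha> \<le> k then L \<alpha> else 0)"

definition vdist :: "nat \<Rightarrow> (('n::finite \<Rightarrow>\<^sub>0 nat) \<Rightarrow> real) \<Rightarrow> (('n \<Rightarrow>\<^sub>0 nat) \<Rightarrow> real) \<Rightarrow> real" where
  "vdist k u v = sqrt (\<Sum>\<alpha>\<in>idx k. (u \<alpha> - v \<alpha>)\<^sup>2)"

definition apply_fun :: "(('n::finite \<Rightarrow>\<^sub>0 nat) \<Rightarrow> real) \<Rightarrow> 'n rpoly \<Rightarrow> real" where
  "apply_fun L q = (\<Sum>\<alpha>\<in>Poly_Mapping.keys q. Poly_Mapping.lookup q \<alpha> * L \<alpha>)"

definition moments :: "'n::finite rpoly list \<Rightarrow> nat \<Rightarrow> (('n \<Rightarrow>\<^sub>0 nat) \<Rightarrow> real) set" where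
  "moments gs k = {truncv k (\<lambda>\<alpha>. integral\<^sup>L \<mu> (mon_eval \<alpha>)) | \<mu>.
      prob_space \<mu> \<and> sets \<mu> = sets borel \<and> (AE x in \<mu>. x \<in> semialg gs)}"

definition pseudo :: "'n::finite rpoly list \<Rightarrow> nat \<Rightarrow> (('n \<Rightarrow>\<^sub>0 nat) \<Rightarrow> real) set" where
  "pseudo gs l = {L. (\<forall>\<alpha>. \<not> mdeg \<alpha> \<le> l \<longrightarrow> L \<alpha> = 0) \<and>
      (\<forall>q\<in>quadmod l gs. apply_fun L q \<ge> 0) \<and> L 0 = 1}"

text \<open>Hausdorff distance (valued in ereal, so no junk values for unbounded sets)\<close>
definition hausd :: "nat \<Rightarrow> (('n::finite \<Rightarrow>\<^sub>0 nat) \<Rightarrow> real) set \<Rightarrow> (('n \<Rightarrow>\<^sub>0 nat) \<Rightarrow> real) set \<Rightarrow> ereal" where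
  "hausd k A B = max (SUP a\<in>A. INF b\<in>B. ereal (vdist k a b))
                     (SUP b\<in>B. INF a\<in>A. ereal (vdist k b a))"

end

theory Submission
  imports Defs "HOL-Library.Multiset"
begin

lemma keys_finite_sum: "finite A \<Longrightarrow> Poly_Mapping.keys p \<subseteq> A \<Longrightarrow>
  peval p x = (\<Sum>\<alpha>\<in>A. Poly_Mapping.lookup p \<alpha> * mon_eval \<alpha> x)"
  unfolding peval_def by (rule sum.mono_neutral_left) (auto simp: in_keys_iff)

lemma peval_add: "peval (p + q) x = peval p x + peval q x"
proof -
  let ?A = "Poly_Mapping.keys p \<union> Poly_Mapping.keys q"
  have "peval (p+q) x = (\<Sum>\<alpha>\<in>?A. Poly_Mapping.lookup (p+q) \<alpha> * mon_eval \<alpha> x)"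
    by (rule keys_finite_sum) (auto simp: keys_add)
  also have "\<dots> = (\<Sum>\<alpha>\<in>?A. Poly_Mapping.lookup p \<alpha> * mon_eval \<alpha> x) + (\<Sum>\<alpha>\<in>?A. Poly_Mapping.lookup q \<alpha> * mon_eval \<alpha> x)"
    by (simp add: lookup_add distrib_right sum.distrib)
  also have "\<dots> = peval p x + peval q x"
    by (subst (1 2) keys_finite_sum[symmetric]) auto
  finally show ?thesis .
qed

lemma peval_zero[simp]: "peval 0 x = 0" by (simp add: peval_def)

lemma peval_sum: "peval (\<Sum>i\<in>I. p i) x = (\<Sum>i\<in>I. peval (p i) x)"
  by (induction I rule: infinite_finite_induct) (auto simp: peval_add)

lemma peval_uminus: "peval (- p) x = - peval p x"
  using peval_add[of p "-p" x] by simp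

lemma peval_diff: "peval (p - q) x = peval p x - peval q x"
  using peval_add[of p "-q" x] by (simp add: peval_uminus)

lemma mon_eval_add: "mon_eval (a + b) x = mon_eval a x * mon_eval b x"
  by (simp add: mon_eval_def lookup_add power_add prod.distrib)

lemma mon_eval_zero[simp]: "mon_eval 0 x = 1"
  by (simp add: mon_eval_def)

lemma peval_single[simp]: "peval (Poly_Mapping.single a c) x = c * mon_eval a x"
  by (simp add: peval_def)

lemma poly_expand: "p = (\<Sum>\<alpha>\<in>Poly_Mapping.keys p. Poly_Mapping.single \<alpha> (Poly_Mapping.lookup p \<alpha>))"
proof (rule poly_mapping_eqI)
  fix k
  show "Poly_Mapping.lookup p k = Poly_Mapping.lookup (\<Sum>\<alpha>\<in>Poly_Mapping.keys p. Poly_Mapping.single \<alpha> (Poly_Mapping.lookup p \<alpha>)) k"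
    by (simp add: lookup_sum lookup_single when_def in_keys_iff)
qed

lemma peval_mult: "peval (p * q) x = peval p x * peval (q :: 'n::finite rpoly) x"
proof -
  have "p * q = (\<Sum>a\<in>Poly_Mapping.keys p. \<Sum>b\<in>Poly_Mapping.keys q.
      Poly_Mapping.single a (Poly_Mapping.lookup p a) * Poly_Mapping.single b (Poly_Mapping.lookup q b))"
    by (subst (1) poly_expand, subst (2) poly_expand) (simp add: sum_product)
  then have "peval (p*q) x = (\<Sum>a\<in>Poly_Mapping.keys p. \<Sum>b\<in>Poly_Mapping.keys q.
      Poly_Mapping.lookup p a * mon_eval a x * (Poly_Mapping.lookup q b * mon_eval b x))"
    by (simp add: peval_sum mult_single mon_eval_add mult_ac)
  also have "\<dots> = peval p x * peval q x"
    by (simp add: peval_def sum_product)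
  finally show ?thesis .
qed

lemma peval_one[simp]: "peval 1 x = 1"
  by (simp add: peval_def)

lemma sos_nonneg: "is_sos s \<Longrightarrow> peval s x \<ge> 0"
proof -
  assume "is_sos s"
  then obtain qs where "s = sum_list (map (\<lambda>q. q * q) qs)" by (auto simp: is_sos_def)
  then show ?thesis
    by (induction qs arbitrary: s) (auto simp: peval_add peval_mult)
qed

lemma quadmod_nonneg:
  assumes "q \<in> quadmod l gs" "x \<in> semialg gs"
  shows "peval q x \<ge> 0"
proof -
  obtain s0 s where q: "q = s0 + (\<Sum>i<length gs. s i * gs ! i)" and s0: "is_sos s0"
    and s: "\<forall>i<length gs. is_sos (s i)"
    using assms(1) unfolding quadmod_def by blast
  have "\<forall>i<length gs. peval (gs ! i) x \<ge> 0" using assms(2) by (auto simp: semialg_def)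
  then have "\<forall>i<length gs. peval (s i * gs ! i) x \<ge> 0" using s
    by (auto simp: peval_mult intro!: mult_nonneg_nonneg[OF sos_nonneg])
  then show ?thesis using s0
    by (auto simp: q peval_add peval_sum intro!: add_nonneg_nonneg sum_nonneg sos_nonneg[OF s0])
qed

lemma peval_sqnormX: "peval sqnormX x = (\<Sum>i\<in>UNIV. (x $ i)^2)"
proof -
  have "mon_eval (Poly_Mapping.single i 2) x = (x $ i)^2" for i
  proof -
    have "mon_eval (Poly_Mapping.single i 2) x = (\<Prod>j\<in>UNIV. (x $ j) ^ (if i = j then 2 else 0))"
      by (simp add: mon_eval_def lookup_single when_def)
    also have "(\<lambda>j. (x $ j) ^ (if i = j then 2 else 0)) = (\<lambda>j. if i = j then (x $ j)^2 else 1)"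
      by auto
    also have "(\<Prod>j\<in>UNIV. if i = j then (x $ j)^2 else 1) = (x $ i)^2"
      by (simp add: prod.delta)
    finally show ?thesis .
  qed
  then show ?thesis by (simp add: sqnormX_def peval_sum)
qed

lemma cont_mon: "continuous_on A (mon_eval \<alpha>)"
  unfolding mon_eval_def by (intro continuous_intros)

lemma cont_peval: "continuous_on A (peval p)"
  unfolding peval_def by (intro continuous_intros cont_mon)

lemma closed_semialg: "closed (semialg gs)"
proof -
  have "semialg gs = (\<Inter>g\<in>set gs. {x. peval g x \<ge> 0})" by (auto simp: semialg_def)
  moreover have "closed {x. peval g x \<ge> 0}" for g
    using continuous_closed_preimage_constant[of UNIV "peval g"]
    by (intro closed_Collect_le cont_peval continuous_on_const)
  ultimately show ?thesis by auto
qed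

lemma meas_mon: "mon_eval \<alpha> \<in> borel_measurable borel"
  using cont_mon by (rule borel_measurable_continuous_onI)

lemma mon_bound: "x \<in> cube \<Longrightarrow> \<bar>mon_eval \<alpha> x\<bar> \<le> 1"
  unfolding mon_eval_def cube_def
  by (auto simp: abs_prod power_abs intro!: prod_le_1 power_le_one)

lemma S_cube:
  assumes arch: "1 - sqnormX \<in> quadmod l0 gs" and x: "x \<in> semialg gs"
  shows "x \<in> cube"
proof -
  have "peval (1 - sqnormX) x \<ge> 0" by (rule quadmod_nonneg[OF arch x])
  then have s: "(\<Sum>i\<in>UNIV. (x $ i)^2) \<le> 1" by (simp add: peval_diff peval_sqnormX)
  have "\<bar>x $ i\<bar> \<le> 1" for i
  proof -
    have "(x $ i)^2 \<le> (\<Sum>i\<in>UNIV. (x $ i)^2)"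
      by (rule member_le_sum) auto
    then have "(x $ i)^2 \<le> 1^2" using s by simp
    then show ?thesis using abs_le_square_iff by (metis abs_one)
  qed
  then show ?thesis by (auto simp: cube_def)
qed

lemma finite_idx: "finite (idx k :: ('n::finite \<Rightarrow>\<^sub>0 nat) set)"
proof -
  have "Poly_Mapping.lookup ` (idx k :: ('n \<Rightarrow>\<^sub>0 nat) set) \<subseteq> PiE UNIV (\<lambda>_. {..k})"
  proof
    fix f assume "f \<in> Poly_Mapping.lookup ` (idx k :: ('n \<Rightarrow>\<^sub>0 nat) set)"
    then obtain \<alpha> where a: "mdeg \<alpha> \<le> k" "f = Poly_Mapping.lookup \<alpha>" by (auto simp: idx_def)
    have "Poly_Mapping.lookup \<alpha> i \<le> k" for i
      using a(1) member_le_sum[of i UNIV "Poly_Mapping.lookup \<alpha>"] by (auto simp: mdeg_def)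
    then show "f \<in> PiE UNIV (\<lambda>_. {..k})" using a by auto
  qed
  then have "finite (Poly_Mapping.lookup ` (idx k :: ('n \<Rightarrow>\<^sub>0 nat) set))"
    by (rule finite_subset) (intro finite_PiE, auto)
  then show ?thesis
    by (rule finite_imageD) (auto intro: inj_onI poly_mapping_eqI)
qed

lemma mdeg_zero[simp]: "mdeg 0 = 0" by (simp add: mdeg_def)

lemma zero_idx[simp]: "0 \<in> idx k" by (simp add: idx_def)

lemma keys_pdeg: "\<alpha> \<in> Poly_Mapping.keys p \<Longrightarrow> mdeg \<alpha> \<le> pdeg p"
  unfolding pdeg_def by (rule Max_ge) auto

lemma pdeg_le: "Poly_Mapping.keys p \<subseteq> idx k \<Longrightarrow> pdeg p \<le> k"
  unfolding pdeg_def by (subst Max_le_iff) (auto simp: idx_def)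

lemma quadmod_keys:
  assumes "q \<in> quadmod l gs"
  shows "Poly_Mapping.keys q \<subseteq> idx l"
proof -
  obtain s0 s where q: "q = s0 + (\<Sum>i<length gs. s i * gs ! i)" and s0: "pdeg s0 \<le> l"
    and s: "\<forall>i<length gs. pdeg (s i * gs ! i) \<le> l"
    using assms(1) unfolding quadmod_def by blast
  have A: "Poly_Mapping.keys s0 \<subseteq> idx l"
  proof
    fix a assume "a \<in> Poly_Mapping.keys s0"
    then have "mdeg a \<le> pdeg s0" by (rule keys_pdeg)
    then show "a \<in> idx l" using s0 by (simp add: idx_def)
  qed
  have B: "Poly_Mapping.keys (s i * gs ! i) \<subseteq> idx l" if i: "i < length gs" for i
  proof
    fix a assume "a \<in> Poly_Mapping.keys (s i * gs ! i)"
    then have "mdeg a \<le> pdeg (s i * gs ! i)" by (rule keys_pdeg)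
    moreover have "pdeg (s i * gs ! i) \<le> l" using s i by blast
    ultimately show "a \<in> idx l" by (simp add: idx_def)
  qed
  have C: "Poly_Mapping.keys (\<Sum>i<length gs. s i * gs ! i) \<subseteq> idx l"
    using keys_sum[of "\<lambda>i. s i * gs ! i" "{..<length gs}"] B by auto
  show ?thesis unfolding q using keys_add[of s0] A C by auto
qed

lemma apply_fun_sum: "finite A \<Longrightarrow> Poly_Mapping.keys q \<subseteq> A \<Longrightarrow>
  apply_fun L q = (\<Sum>\<alpha>\<in>A. Poly_Mapping.lookup q \<alpha> * L \<alpha>)"
  unfolding apply_fun_def by (rule sum.mono_neutral_left) (auto simp: in_keys_iff)

lemma moment_pseudo:
  assumes arch: "1 - sqnormX \<in> quadmod l0 gs"
    and P: "prob_space \<mu>" "sets \<mu> = sets borel" "AE x in \<mu>. x \<in> semialg gs"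
  shows "truncv l (\<lambda>\<alpha>. integral\<^sup>L \<mu> (mon_eval \<alpha>)) \<in> pseudo gs l"
proof -
  interpret prob_space \<mu> by fact
  have meas: "mon_eval \<alpha> \<in> borel_measurable \<mu>" for \<alpha>
    using meas_mon measurable_cong_sets[OF P(2) refl] by blast
  have int: "integrable \<mu> (mon_eval \<alpha>)" for \<alpha>
  proof (rule integrable_const_bound[where B=1])
    show "mon_eval \<alpha> \<in> borel_measurable \<mu>" by (rule meas)
    show "AE x in \<mu>. norm (mon_eval \<alpha> x) \<le> 1"
      using P(3) by eventually_elim (auto intro: mon_bound S_cube[OF arch])
  qed
  have "apply_fun (truncv l (\<lambda>\<alpha>. integral\<^sup>L \<mu> (mon_eval \<alpha>))) q \<ge> 0" if q: "q \<in> quadmod l gs" for q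
  proof -
    have k: "Poly_Mapping.keys q \<subseteq> idx l" by (rule quadmod_keys[OF q])
    have "apply_fun (truncv l (\<lambda>\<alpha>. integral\<^sup>L \<mu> (mon_eval \<alpha>))) q
       = (\<Sum>\<alpha>\<in>Poly_Mapping.keys q. Poly_Mapping.lookup q \<alpha> * integral\<^sup>L \<mu> (mon_eval \<alpha>))"
      unfolding apply_fun_def truncv_def using k by (intro sum.cong) (auto simp: idx_def)
    also have "\<dots> = integral\<^sup>L \<mu> (peval q)"
      unfolding peval_def using int by (subst Bochner_Integration.integral_sum) (auto simp: integral_mult_right_zero)
    also have "\<dots> \<ge> 0"
      using P(3) by (intro integral_nonneg_AE) (auto elim!: eventually_mono intro: quadmod_nonneg[OF q])
    finally show ?thesis .
  qed
  moreover have "truncv l (\<lambda>\<alpha>. integral\<^sup>L \<mu> (mon_eval \<alpha>)) 0 = 1"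
    by (simp add: truncv_def prob_space mon_eval_zero[abs_def])
  ultimately show ?thesis by (auto simp: pseudo_def truncv_def)
qed

lemma card_idx: "card (idx k :: ('n::finite \<Rightarrow>\<^sub>0 nat) set) \<le> (CARD('n) + k) choose k"
proof -
  define M where "M = (\<lambda>\<alpha>::'n \<Rightarrow>\<^sub>0 nat. (\<Sum>i\<in>UNIV. replicate_mset (Poly_Mapping.lookup \<alpha> i) (Some i))
     + replicate_mset (k - mdeg \<alpha>) None)"
  have cnt: "count (M \<alpha>) (Some i) = Poly_Mapping.lookup \<alpha> i" for \<alpha> i
    by (simp add: M_def count_sum)
  have inj: "inj_on M (idx k)"
  proof (rule inj_onI)
    fix a b assume "M a = M b"
    then have "Poly_Mapping.lookup a i = Poly_Mapping.lookup b i" for i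
      using cnt by metis
    then show "a = b" by (rule poly_mapping_eqI)
  qed
  have sub: "M ` idx k \<subseteq> multisets_of_size UNIV k"
    by (auto simp: multisets_of_size_def M_def idx_def mdeg_def)
  have "card (idx k :: ('n \<Rightarrow>\<^sub>0 nat) set) = card (M ` idx k)"
    using inj by (simp add: card_image)
  also have "\<dots> \<le> card (multisets_of_size (UNIV :: 'n option set) k)"
    by (rule card_mono[OF finite_multisets_of_size sub]) simp
  also have "\<dots> = (CARD('n) + k) choose k"
    by (simp add: card_multisets_of_size)
  finally show ?thesis .
qed

lemma binom_sq: "((n + 2*t) choose n) \<le> ((n + t) choose n)^2"
proof (induction n)
  case 0 then show ?case by simp
next
  case (Suc m)
  have e1: "Suc (m + 2*t) * ((m + 2*t) choose m) = ((Suc m + 2*t) choose Suc m) * Suc m"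
    using Suc_times_binomial_eq[of "m + 2*t" m] by simp
  have e2: "Suc (m + t) * ((m + t) choose m) = ((Suc m + t) choose Suc m) * Suc m"
    using Suc_times_binomial_eq[of "m + t" m] by simp
  have ineq: "Suc m * Suc (m + 2*t) \<le> Suc (m + t) * Suc (m + t)"
    by (simp add: algebra_simps)
  have "((Suc m + 2*t) choose Suc m) * (Suc m * Suc m) = Suc m * (Suc (m + 2*t) * ((m + 2*t) choose m))"
    by (subst e1) (simp only: mult_ac)
  also have "\<dots> = (Suc m * Suc (m + 2*t)) * ((m + 2*t) choose m)" by (rule mult.assoc[symmetric])
  also have "\<dots> \<le> (Suc (m + t) * Suc (m + t)) * (((m + t) choose m)^2)"
    by (rule mult_mono[OF ineq Suc.IH]) auto
  also have "\<dots> = (Suc (m + t) * ((m + t) choose m))^2" by (simp only: power2_eq_square mult_ac)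
  also have "\<dots> = (((Suc m + t) choose Suc m))^2 * (Suc m * Suc m)"
    by (simp only: e2) (simp only: power2_eq_square mult_ac)
  finally show ?case by (metis mult_le_cancel2 nat_0_less_mult_iff zero_less_Suc)
qed

lemma binom_ge: "t \<ge> 1 \<Longrightarrow> ((n + t) choose t) \<ge> n + 1"
proof (induction t rule: dec_induct)
  case base then show ?case by simp
next
  case (step t)
  have "((n + Suc t) choose Suc t) = ((n + t) choose t) + ((n + t) choose Suc t)"
    by simp
  then show ?case using step by linarith
qed

lemma card_idx2: "real (card (idx (2*t) :: ('n::finite \<Rightarrow>\<^sub>0 nat) set)) \<le> (real ((CARD('n) + t) choose t))^2"
proof -
  have "card (idx (2*t) :: ('n \<Rightarrow>\<^sub>0 nat) set) \<le> (CARD('n) + 2*t) choose (2*t)" by (rule card_idx)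
  also have "\<dots> = (CARD('n) + 2*t) choose CARD('n)" by (subst binomial_symmetric) auto
  also have "\<dots> \<le> ((CARD('n) + t) choose CARD('n))^2" by (rule binom_sq)
  also have "\<dots> = ((CARD('n) + t) choose t)^2" by (subst binomial_symmetric[of t]) auto
  finally show ?thesis by (metis of_nat_le_iff of_nat_power)
qed

lemma pow_powr: "0 < (x::real) \<Longrightarrow> (x^n) powr r = x powr (real n * r)"
  by (simp add: powr_realpow[symmetric] powr_powr)

lemma key_num:
  fixes a B t :: real
  assumes a: "a > 0" and B: "B \<ge> 3" and t: "t \<ge> 1"
  shows "(2*t) powr (7/2*a) * (2*B+1/2) powr (5/2*a) \<le> 6 powr (5/2*a) * t powr (6*a) * B powr (5/2*a)"
proof -
  have "2*B + 1/2 \<le> 13/6 * B" using B by simp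
  then have h1: "(2*B+1/2)^5 \<le> (13/6*B)^5" by (rule power_mono) (use B in simp)
  have h2: "t^7 \<le> t^12" using t by (simp add: power_increasing)
  have "(2*t)^7 * (2*B+1/2)^5 \<le> (2*t)^7 * (13/6*B)^5"
    by (rule mult_left_mono[OF h1]) (use t in simp)
  also have "\<dots> = (2^7 * (13/6)^5) * (t^7 * B^5)" by (simp only: power_mult_distrib mult_ac)
  also have "\<dots> \<le> 6^5 * (t^12 * B^5)"
  proof (rule mult_mono)
    show "(2::real)^7 * (13/6)^5 \<le> 6^5" by (simp add: power_divide)
    show "t^7 * B^5 \<le> t^12 * B^5" using h2 B by (intro mult_right_mono) auto
    show "(0::real) \<le> 6^5" by simp
    show "0 \<le> t^7 * B^5" using t B by simp
  qed
  finally have P: "(2*t)^7 * (2*B+1/2)^5 \<le> 6^5 * t^12 * B^5" by (simp add: mult_ac)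
  have pos: "0 < 2*t" "0 < 2*B+1/2" "0 < t" "0 < B" using t B by auto
  have "((2*t)^7 * (2*B+1/2)^5) powr (a/2) \<le> (6^5 * t^12 * B^5) powr (a/2)"
    by (rule powr_mono2) (use P pos a in auto)
  moreover have "((2*t)^7 * (2*B+1/2)^5) powr (a/2) = (2*t) powr (7/2*a) * (2*B+1/2) powr (5/2*a)"
  proof -
    have "((2*t)^7 * (2*B+1/2)^5) powr (a/2) = ((2*t)^7) powr (a/2) * ((2*B+1/2)^5) powr (a/2)"
      by (rule powr_mult)
    also have "\<dots> = (2*t) powr (real 7 * (a/2)) * (2*B+1/2) powr (real 5 * (a/2))"
      by (simp only: pow_powr[OF pos(1)] pow_powr[OF pos(2)])
    also have "real 7 * (a/2) = 7/2*a" by simp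
    also have "real 5 * (a/2) = 5/2*a" by simp
    finally show ?thesis .
  qed
  moreover have "(6^5 * t^12 * B^5) powr (a/2) = 6 powr (5/2*a) * t powr (6*a) * B powr (5/2*a)"
  proof -
    have "(6^5 * t^12 * B^5) powr (a/2) = ((6::real)^5) powr (a/2) * (t^12) powr (a/2) * (B^5) powr (a/2)"
      by (simp only: powr_mult)
    also have "\<dots> = 6 powr (real 5 * (a/2)) * t powr (real 12 * (a/2)) * B powr (real 5 * (a/2))"
      by (simp only: pow_powr[OF pos(3)] pow_powr[OF pos(4)] pow_powr[of 6])
    also have "real 5 * (a/2) = 5/2*a" by simp
    also have "real 12 * (a/2) = 6*a" by simp
    finally show ?thesis .
  qed
  ultimately show ?thesis by simp
qed

lemma sq_le: "((x::real) - y)^2 \<le> 2*x^2 + 2*y^2"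
proof -
  have "0 \<le> (x+y)^2" by simp
  then show ?thesis by (simp add: power2_eq_square algebra_simps)
qed

lemma separation:
  fixes I :: "'a set" and K :: "('a \<Rightarrow> real) set" and L :: "'a \<Rightarrow> real"
  assumes finI: "finite I" and Kne: "K \<noteq> {}"
   and conv: "\<And>k1 k2 s. k1\<in>K \<Longrightarrow> k2\<in>K \<Longrightarrow> 0 \<le> s \<Longrightarrow> s \<le> 1 \<Longrightarrow> (\<lambda>\<alpha>. k1 \<alpha> + s*(k2 \<alpha> - k1 \<alpha>)) \<in> K"
   and bnd: "\<And>k. k\<in>K \<Longrightarrow> (\<Sum>\<alpha>\<in>I. (k \<alpha>)^2) \<le> R"
   and far: "\<And>k. k\<in>K \<Longrightarrow> d \<le> sqrt (\<Sum>\<alpha>\<in>I. (L \<alpha> - k \<alpha>)^2)"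
   and e: "0 < e" "e < d"
  shows "\<exists>f. (\<Sum>\<alpha>\<in>I. (f \<alpha>)^2) \<le> 1 \<and> (\<forall>k\<in>K. e \<le> (\<Sum>\<alpha>\<in>I. f \<alpha> * k \<alpha>) - (\<Sum>\<alpha>\<in>I. f \<alpha> * L \<alpha>))"
proof -
  define nq where "nq = (\<lambda>v::'a \<Rightarrow> real. \<Sum>\<alpha>\<in>I. (v \<alpha>)^2)"
  define ip where "ip = (\<lambda>u v::'a \<Rightarrow> real. \<Sum>\<alpha>\<in>I. u \<alpha> * v \<alpha>)"
  obtain k1 where k1: "k1 \<in> K" using Kne by auto
  have R0: "R \<ge> 0" using bnd[OF k1] sum_nonneg[of I "\<lambda>\<alpha>. (k1 \<alpha>)^2"] by simp
  define c where "c = 1/2 + 2*R"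
  have c0: "c > 0" using R0 by (simp add: c_def)
  define s where "s = min 1 ((d-e)*d/c)"
  have s0: "s > 0" using e c0 by (simp add: s_def)
  have s1: "s \<le> 1" by (simp add: s_def)
  have sc: "s * c \<le> (d-e)*d" using c0 by (simp add: s_def min_def field_simps split: if_splits)
  define m where "m = (INF k\<in>K. nq (\<lambda>\<alpha>. L \<alpha> - k \<alpha>))"
  have nqnn: "nq v \<ge> 0" for v unfolding nq_def by (simp add: sum_nonneg)
  have bdd: "bdd_below ((\<lambda>k. nq (\<lambda>\<alpha>. L \<alpha> - k \<alpha>)) ` K)"
    using nqnn by (intro bdd_belowI2[where m=0]) auto
  have "(INF k\<in>K. nq (\<lambda>\<alpha>. L \<alpha> - k \<alpha>)) < m + s^2" using s0 by (simp add: m_def)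
  then have "\<exists>k\<in>K. nq (\<lambda>\<alpha>. L \<alpha> - k \<alpha>) < m + s^2"
    by (simp only: cINF_less_iff[OF Kne bdd])
  then obtain k0 where k0: "k0 \<in> K" "nq (\<lambda>\<alpha>. L \<alpha> - k0 \<alpha>) < m + s^2"
    by blast
  define F where "F = (\<lambda>\<alpha>. k0 \<alpha> - L \<alpha>)"
  have nqF: "nq F = nq (\<lambda>\<alpha>. L \<alpha> - k0 \<alpha>)"
    unfolding nq_def F_def by (intro sum.cong) (auto simp: power2_commute)
  have d0: "d > 0" using e by simp
  have "d \<le> sqrt (nq F)" using far[OF k0(1)] nqF by (simp add: nq_def)
  define r where "r = sqrt (nq F)"
  have rd: "d \<le> r" using \<open>d \<le> sqrt (nq F)\<close> by (simp add: r_def)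
  have r0: "r > 0" using rd d0 by simp
  have rr: "r * r = nq F" using nqnn by (simp add: r_def)
  have main: "ip F k - ip F L \<ge> nq F - s * c" if k: "k \<in> K" for k
  proof -
    define Dd where "Dd = (\<lambda>\<alpha>. k \<alpha> - k0 \<alpha>)"
    have ks: "(\<lambda>\<alpha>. k0 \<alpha> + s*(k \<alpha> - k0 \<alpha>)) \<in> K" using conv[OF k0(1) k] s0 s1 by simp
    have "m \<le> nq (\<lambda>\<alpha>. L \<alpha> - (k0 \<alpha> + s*(k \<alpha> - k0 \<alpha>)))"
      unfolding m_def by (rule cINF_lower[OF bdd ks])
    also have "nq (\<lambda>\<alpha>. L \<alpha> - (k0 \<alpha> + s*(k \<alpha> - k0 \<alpha>))) = (\<Sum>\<alpha>\<in>I. (F \<alpha>)^2 + 2 * s * (F \<alpha> * Dd \<alpha>) + s^2*(Dd \<alpha>)^2)"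
      unfolding nq_def F_def Dd_def
      by (intro sum.cong) (simp_all add: power2_eq_square algebra_simps)
    also have "\<dots> = nq F + 2 * s * ip F Dd + s^2 * nq Dd"
      unfolding nq_def ip_def by (simp add: sum.distrib sum_distrib_left)
    finally have A: "m \<le> nq F + 2 * s * ip F Dd + s^2 * nq Dd" .
    have "nq Dd \<le> (\<Sum>\<alpha>\<in>I. 2*(k \<alpha>)^2 + 2*(k0 \<alpha>)^2)"
      unfolding nq_def Dd_def by (intro sum_mono sq_le)
    also have "\<dots> = 2 * nq k + 2 * nq k0"
      unfolding nq_def by (simp add: sum.distrib sum_distrib_left)
    also have "\<dots> \<le> 4 * R" using bnd[OF k] bnd[OF k0(1)] by (simp add: nq_def)
    finally have B: "nq Dd \<le> 4 * R" .
    have C: "nq F < m + s^2" using k0(2) nqF by simp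
    have "s^2 * nq Dd \<le> s^2 * (4*R)" using B by (intro mult_left_mono) auto
    then have "2 * s * ip F Dd > -(s^2 * (1 + 4*R))" using A C by (simp add: algebra_simps)
    then have "2 * s * ip F Dd > 2 * s * (-(s * c))" by (simp add: c_def power2_eq_square algebra_simps)
    then have X: "(2* s) * (-(s * c)) < (2* s) * ip F Dd" by (simp only: mult.assoc)
    have "0 < 2* s" using s0 by simp
    then have "ip F Dd > -(s * c)" using X mult_less_cancel_left_pos by blast
    moreover have "ip F k - ip F L = ip F Dd + nq F"
    proof -
      have "ip F k - ip F L = (\<Sum>\<alpha>\<in>I. F \<alpha> * k \<alpha> - F \<alpha> * L \<alpha>)"
        unfolding ip_def by (simp add: sum_subtractf)
      also have "\<dots> = (\<Sum>\<alpha>\<in>I. F \<alpha> * Dd \<alpha> + (F \<alpha>)^2)"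
        by (intro sum.cong) (simp_all add: Dd_def F_def power2_eq_square algebra_simps)
      also have "\<dots> = ip F Dd + nq F"
        unfolding ip_def nq_def by (simp add: sum.distrib)
      finally show ?thesis .
    qed
    ultimately show ?thesis by simp
  qed
  define f where "f = (\<lambda>\<alpha>. F \<alpha> / r)"
  have "nq f = nq F / (r*r)" unfolding nq_def f_def
    by (simp add: power_divide sum_divide_distrib power2_eq_square)
  moreover have "r * r > 0" using r0 by simp
  ultimately have nf: "nq f = 1" using rr by simp
  have "e \<le> ip f k - ip f L" if k: "k \<in> K" for k
  proof -
    have "ip f k - ip f L = (ip F k - ip F L) / r"
      unfolding ip_def f_def by (simp add: sum_divide_distrib diff_divide_distrib)
    also have "\<dots> \<ge> (r*r - s*c) / r" using main[OF k] rr r0 by (simp add: divide_right_mono)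
    finally have X: "ip f k - ip f L \<ge> r - s*c/r" using r0 by (simp add: field_simps)
    have "s*c/r \<le> s*c/d" using rd d0 s0 c0 by (intro divide_left_mono) auto
    also have "\<dots> \<le> d - e" using sc d0 by (simp add: field_simps)
    finally show ?thesis using X rd by linarith
  qed
  then show ?thesis using nf unfolding nq_def ip_def by (intro exI[of _ f]) auto
qed

definition mixvec :: "(real^'n) set \<Rightarrow> (real^'n \<Rightarrow> real) \<Rightarrow> ('n::finite \<Rightarrow>\<^sub>0 nat) \<Rightarrow> real" where
  "mixvec F w = (\<lambda>\<alpha>. \<Sum>x\<in>F. w x * mon_eval \<alpha> x)"

lemma mix_moment:
  fixes F :: "(real^'n::finite) set"
  assumes F: "finite F" "F \<subseteq> semialg gs" and w: "\<And>x. x \<in> F \<Longrightarrow> 0 \<le> w x" "sum w F = 1"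
  shows "\<exists>\<mu>. prob_space \<mu> \<and> sets \<mu> = sets borel \<and> (AE x in \<mu>. x \<in> semialg gs) \<and>
     (\<forall>\<alpha>. integral\<^sup>L \<mu> (mon_eval \<alpha>) = mixvec F w \<alpha>)"
proof -
  define f where "f = (\<lambda>x. if x \<in> F then w x else 0)"
  have nn: "\<And>x. 0 \<le> f x" using w by (simp add: f_def)
  have "(\<integral>\<^sup>+x. ennreal (f x) \<partial>count_space UNIV) = (\<Sum>x\<in>F. ennreal (f x))"
    by (rule nn_integral_count_space') (use F in \<open>auto simp: f_def\<close>)
  also have "\<dots> = ennreal (\<Sum>x\<in>F. f x)" using nn by simp
  also have "(\<Sum>x\<in>F. f x) = 1" using w by (simp add: f_def)
  finally have pr: "(\<integral>\<^sup>+x. ennreal (f x) \<partial>count_space UNIV) = 1" by simp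
  define p where "p = embed_pmf f"
  have pmf_p: "pmf p x = f x" for x unfolding p_def by (rule pmf_embed_pmf[OF nn pr])
  have set_p: "set_pmf p \<subseteq> F"
    unfolding p_def set_embed_pmf[OF nn pr] by (auto simp: f_def split: if_splits)
  define \<mu> where "\<mu> = distr (measure_pmf p) borel (\<lambda>x. x)"
  have meas: "(\<lambda>x. x) \<in> measurable (measure_pmf p) borel" by simp
  have ps: "prob_space \<mu>"
    unfolding \<mu>_def by (rule prob_space.prob_space_distr[OF prob_space_measure_pmf meas])
  have sets: "sets \<mu> = sets borel" by (simp add: \<mu>_def)
  have Sb: "semialg gs \<in> sets borel" using closed_semialg by (rule borel_closed)
  have ae: "AE x in \<mu>. x \<in> semialg gs"
    unfolding \<mu>_def
    by (subst AE_distr_iff[OF meas]) (use Sb set_p F in \<open>auto simp: AE_measure_pmf_iff\<close>)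
  have int: "integral\<^sup>L \<mu> (mon_eval \<alpha>) = mixvec F w \<alpha>" for \<alpha>
  proof -
    have "integral\<^sup>L \<mu> (mon_eval \<alpha>) = integral\<^sup>L (measure_pmf p) (\<lambda>x. mon_eval \<alpha> x)"
      unfolding \<mu>_def by (subst integral_distr[OF meas meas_mon]) simp
    also have "\<dots> = (\<Sum>a\<in>F. pmf p a *\<^sub>R mon_eval \<alpha> a)"
      by (rule integral_measure_pmf[OF F(1)]) (use set_p in auto)
    also have "\<dots> = mixvec F w \<alpha>"
      by (simp add: mixvec_def pmf_p f_def)
    finally show ?thesis .
  qed
  show ?thesis using ps sets ae int by blast
qed

lemma sum_restrict_if: "finite B \<Longrightarrow> A \<subseteq> B \<Longrightarrow> (\<Sum>x\<in>B. (if x \<in> A then g x else 0) * (h x :: real)) = (\<Sum>x\<in>A. g x * h x)"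
  by (rule sum.mono_neutral_cong_right) auto

lemma mix_convex:
  assumes F1: "finite F1" and F2: "finite F2" and s: "0 \<le> s" "s \<le> 1"
    and w1: "\<And>x. x \<in> F1 \<Longrightarrow> 0 \<le> w1 x" "sum w1 F1 = 1"
    and w2: "\<And>x. x \<in> F2 \<Longrightarrow> 0 \<le> w2 x" "sum w2 F2 = 1"
  defines "w \<equiv> (\<lambda>x. (1-s) * (if x \<in> F1 then w1 x else 0) + s * (if x \<in> F2 then w2 x else 0))"
  shows "(\<lambda>\<alpha>. mixvec F1 w1 \<alpha> + s * (mixvec F2 w2 \<alpha> - mixvec F1 w1 \<alpha>)) = mixvec (F1 \<union> F2) w"
    and "\<And>x. x \<in> F1 \<union> F2 \<Longrightarrow> 0 \<le> w x" and "sum w (F1 \<union> F2) = 1"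
proof -
  have fin: "finite (F1 \<union> F2)" using F1 F2 by simp
  have e1: "(\<Sum>x\<in>F1 \<union> F2. (if x \<in> F1 then w1 x else 0) * h x) = (\<Sum>x\<in>F1. w1 x * h x)" for h
    by (rule sum_restrict_if[OF fin]) auto
  have e2: "(\<Sum>x\<in>F1 \<union> F2. (if x \<in> F2 then w2 x else 0) * h x) = (\<Sum>x\<in>F2. w2 x * h x)" for h
    by (rule sum_restrict_if[OF fin]) auto
  have gen: "(\<Sum>x\<in>F1 \<union> F2. w x * h x) = (1-s) * (\<Sum>x\<in>F1. w1 x * h x) + s * (\<Sum>x\<in>F2. w2 x * h x)" for h
  proof -
    have "(\<Sum>x\<in>F1 \<union> F2. w x * h x) = (\<Sum>x\<in>F1 \<union> F2. (1-s) * ((if x \<in> F1 then w1 x else 0) * h x) + s * ((if x \<in> F2 then w2 x else 0) * h x))"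
      by (intro sum.cong) (simp_all add: w_def algebra_simps)
    also have "\<dots> = (1-s) * (\<Sum>x\<in>F1 \<union> F2. (if x \<in> F1 then w1 x else 0) * h x) + s * (\<Sum>x\<in>F1 \<union> F2. (if x \<in> F2 then w2 x else 0) * h x)"
      by (simp add: sum.distrib sum_distrib_left)
    also have "\<dots> = (1-s) * (\<Sum>x\<in>F1. w1 x * h x) + s * (\<Sum>x\<in>F2. w2 x * h x)"
      by (simp only: e1 e2)
    finally show ?thesis .
  qed
  show "(\<lambda>\<alpha>. mixvec F1 w1 \<alpha> + s * (mixvec F2 w2 \<alpha> - mixvec F1 w1 \<alpha>)) = mixvec (F1 \<union> F2) w"
    by (rule ext) (simp add: mixvec_def gen algebra_simps)
  show "\<And>x. x \<in> F1 \<union> F2 \<Longrightarrow> 0 \<le> w x"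
    using w1 w2 s by (auto simp: w_def intro!: add_nonneg_nonneg mult_nonneg_nonneg)
  show "sum w (F1 \<union> F2) = 1"
    using gen[of "\<lambda>_. 1"] w1(2) w2(2) by simp
qed

lemma mix_bound:
  assumes "F \<subseteq> cube" "\<And>x. x \<in> F \<Longrightarrow> 0 \<le> w x" "sum w F = 1"
  shows "\<bar>mixvec F w \<alpha>\<bar> \<le> 1"
proof -
  have "\<bar>mixvec F w \<alpha>\<bar> \<le> (\<Sum>x\<in>F. \<bar>w x * mon_eval \<alpha> x\<bar>)"
    unfolding mixvec_def by (rule sum_abs)
  also have "\<dots> \<le> (\<Sum>x\<in>F. w x)"
  proof (rule sum_mono)
    fix x assume x: "x \<in> F"
    have "\<bar>w x * mon_eval \<alpha> x\<bar> = w x * \<bar>mon_eval \<alpha> x\<bar>" using assms(2)[OF x] by (simp add: abs_mult)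
    also have "\<dots> \<le> w x * 1"
      using assms(2)[OF x] mon_bound[of x \<alpha>] assms(1) x by (intro mult_left_mono) auto
    finally show "\<bar>w x * mon_eval \<alpha> x\<bar> \<le> w x" by simp
  qed
  finally show ?thesis using assms(3) by simp
qed

lemma arith_final:
  fixes N LL \<gamma> \<epsilon> t B \<sigma> pd E lr :: real
  assumes N: "N \<ge> 2" "LL \<ge> 1" "\<gamma> \<ge> 1" "0 < \<epsilon>" "\<epsilon> \<le> 1/2" "t \<ge> 1" "B \<ge> 3" "0 \<le> \<sigma>" "\<sigma> \<le> B"
     "0 \<le> pd" "pd \<le> 2*t" "\<epsilon>/(2*\<sigma>+\<epsilon>) \<le> E"
   and lb: "lr \<ge> \<gamma> * 6 powr (5/2*N*LL) * t powr (6*N*LL) * B powr (5/2*N*LL) * \<epsilon> powr (-(5/2)*N*LL)"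
  shows "\<gamma> * pd powr (7/2*N*LL) * E powr (-(5/2)*N*LL) \<le> lr"
proof -
  define a where "a = N*LL"
  have a0: "a > 0" using N by (simp add: a_def)
  define c where "c = 5/2*N*LL"
  have c0: "c > 0" using N by (simp add: c_def)
  have ec: "-(5/2)*N*LL = -c" by (simp add: c_def)
  define e0 where "e0 = \<epsilon>/(2*\<sigma>+\<epsilon>)"
  have e00: "e0 > 0" using N by (simp add: e0_def)
  have A1: "pd powr (7/2*N*LL) \<le> (2*t) powr (7/2*N*LL)"
    by (rule powr_mono2) (use N in auto)
  have A2: "E powr (-c) \<le> e0 powr (-c)"
    by (rule powr_mono2') (use N e00 c0 in \<open>auto simp: e0_def\<close>)
  have A3: "e0 powr (-c) = (2*\<sigma>+\<epsilon>) powr c / \<epsilon> powr c"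
    by (simp add: e0_def powr_minus_divide powr_divide)
  have A4: "(2*\<sigma>+\<epsilon>) powr c \<le> (2*B+1/2) powr c"
    by (rule powr_mono2) (use N c0 in auto)
  have K: "(2*t) powr (7/2*a) * (2*B+1/2) powr (5/2*a) \<le> 6 powr (5/2*a) * t powr (6*a) * B powr (5/2*a)"
    by (rule key_num[OF a0]) (use N in auto)
  have K': "(2*t) powr (7/2*N*LL) * (2*B+1/2) powr c \<le> 6 powr c * t powr (6*N*LL) * B powr c"
    using K by (simp add: a_def c_def mult.assoc)
  have epc: "\<epsilon> powr c > 0" using N by simp
  have "\<gamma> * pd powr (7/2*N*LL) * E powr (-(5/2)*N*LL) = \<gamma> * (pd powr (7/2*N*LL) * E powr (-c))"
    unfolding ec by (rule mult.assoc)
  also have "\<dots> \<le> \<gamma> * ((2*t) powr (7/2*N*LL) * e0 powr (-c))"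
    using N A1 A2 by (intro mult_left_mono mult_mono) auto
  also have "\<dots> = \<gamma> * ((2*t) powr (7/2*N*LL) * (2*\<sigma>+\<epsilon>) powr c) / \<epsilon> powr c"
    by (simp add: A3)
  also have "\<dots> \<le> \<gamma> * ((2*t) powr (7/2*N*LL) * (2*B+1/2) powr c) / \<epsilon> powr c"
    using N A4 epc by (intro divide_right_mono mult_left_mono) auto
  also have "\<dots> \<le> \<gamma> * (6 powr c * t powr (6*N*LL) * B powr c) / \<epsilon> powr c"
    using N K' epc by (intro divide_right_mono mult_left_mono) auto
  also have "\<dots> = \<gamma> * 6 powr (5/2*N*LL) * t powr (6*N*LL) * B powr (5/2*N*LL) * \<epsilon> powr (-(5/2)*N*LL)"
    by (simp add: ec c_def powr_minus_divide)
  also have "\<dots> \<le> lr" by (rule lb)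
  finally show ?thesis .
qed

lemma truncv_truncv: "k \<le> l \<Longrightarrow> truncv k (truncv l m) = truncv k m"
  by (auto simp: truncv_def fun_eq_iff)

lemma partA:
  assumes arch: "1 - sqnormX \<in> quadmod l0 gs" and kl: "k \<le> l" and eps: "0 \<le> \<epsilon>"
  shows "(SUP a\<in>moments gs k. INF b\<in>truncv k ` pseudo gs l. ereal (vdist k a b)) \<le> ereal \<epsilon>"
proof (rule SUP_least)
  fix a assume "a \<in> moments gs k"
  then obtain \<mu> where a: "a = truncv k (\<lambda>\<alpha>. integral\<^sup>L \<mu> (mon_eval \<alpha>))"
    and P: "prob_space \<mu>" "sets \<mu> = sets borel" "AE x in \<mu>. x \<in> semialg gs"
    unfolding moments_def by blast
  have mem: "truncv l (\<lambda>\<alpha>. integral\<^sup>L \<mu> (mon_eval \<alpha>)) \<in> pseudo gs l"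
    by (rule moment_pseudo[OF arch P])
  have "a \<in> truncv k ` pseudo gs l"
    using mem truncv_truncv[OF kl] a by (metis image_eqI)
  moreover have "vdist k a a = 0" by (simp add: vdist_def)
  ultimately show "(INF b\<in>truncv k ` pseudo gs l. ereal (vdist k a b)) \<le> ereal \<epsilon>"
    using eps by (metis INF_lower2 ereal_less_eq(3) zero_ereal_def)
qed

lemma partB:
  fixes gs :: "'n::finite rpoly list"
    and l0 :: nat and LL \<gamma> \<epsilon> :: real and t l :: nat
  assumes n2: "CARD('n) \<ge> 2"
    and Sne: "semialg gs \<noteq> {}"
    and arch: "1 - sqnormX \<in> quadmod l0 gs"
    and LL1: "LL \<ge> 1"
    and gam1: "\<gamma> \<ge> 1"
    and putinar: "\<forall>f::'n rpoly. \<forall>m::nat. fstar gs f > 0 \<longrightarrow>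
        real m \<ge> \<gamma> * real (pdeg f) powr (7/2 * CARD('n) * LL) * epsf gs f powr (-(5/2) * CARD('n) * LL)
        \<longrightarrow> f \<in> quadmod m gs"
    and eps: "0 < \<epsilon>" "\<epsilon> \<le> 1/2"
    and t1: "t \<ge> 1"
    and l_big: "real l \<ge> \<gamma> * 6 powr (5/2 * CARD('n) * LL) * real t powr (6 * CARD('n) * LL)
        * real ((CARD('n) + t) choose t) powr (5/2 * CARD('n) * LL) * \<epsilon> powr (-(5/2) * CARD('n) * LL)"
    and L: "L \<in> pseudo gs l"
  shows "(INF a\<in>moments gs (2*t). ereal (vdist (2*t) (truncv (2*t) L) a)) \<le> ereal \<epsilon>"
proof (rule ccontr)
  define S where "S = semialg gs"
  define I where "I = (idx (2*t) :: ('n \<Rightarrow>\<^sub>0 nat) set)"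
  define b where "b = truncv (2*t) L"
  have finI: "finite I" unfolding I_def by (rule finite_idx)
  have bI: "\<And>\<alpha>. \<alpha> \<in> I \<Longrightarrow> b \<alpha> = L \<alpha>" by (simp add: b_def truncv_def I_def idx_def)
  assume "\<not> ?thesis"
  then have "ereal \<epsilon> < (INF a\<in>moments gs (2*t). ereal (vdist (2*t) b a))" by (simp add: b_def)
  then obtain d where d1: "ereal \<epsilon> < ereal d" and d2: "ereal d < (INF a\<in>moments gs (2*t). ereal (vdist (2*t) b a))"
    using ereal_dense2 by blast
  have ed: "\<epsilon> < d" using d1 by simp
  have far_mom: "d \<le> vdist (2*t) b a" if "a \<in> moments gs (2*t)" for a
  proof -
    have "ereal d < ereal (vdist (2*t) b a)"
      using d2 INF_lower[OF that, of "\<lambda>a. ereal (vdist (2*t) b a)"] by (rule less_le_trans)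
    then show ?thesis by simp
  qed
  define K where "K = {mixvec F w | F w. finite F \<and> F \<subseteq> S \<and> (\<forall>x\<in>F. 0 \<le> w x) \<and> sum w F = 1}"
  obtain x0 where x0: "x0 \<in> S" using Sne by (auto simp: S_def)
  have Scube: "\<And>x. x \<in> S \<Longrightarrow> x \<in> cube" using S_cube[OF arch] by (simp add: S_def)
  have dirac: "mixvec {x} (\<lambda>_. 1) \<in> K" if "x \<in> S" for x
    unfolding K_def using that by (intro CollectI exI[of _ "{x}"] exI[of _ "\<lambda>_. 1::real"]) auto
  have Kne: "K \<noteq> {}" using dirac[OF x0] by auto
  have conv: "(\<lambda>\<alpha>. k1 \<alpha> + s*(k2 \<alpha> - k1 \<alpha>)) \<in> K" if kk: "k1 \<in> K" "k2 \<in> K" "0 \<le> s" "s \<le> 1" for k1 k2 s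
  proof -
    obtain F1 w1 where 1: "k1 = mixvec F1 w1" "finite F1" "F1 \<subseteq> S" "\<forall>x\<in>F1. 0 \<le> w1 x" "sum w1 F1 = 1"
      using kk(1) unfolding K_def by blast
    obtain F2 w2 where 2: "k2 = mixvec F2 w2" "finite F2" "F2 \<subseteq> S" "\<forall>x\<in>F2. 0 \<le> w2 x" "sum w2 F2 = 1"
      using kk(2) unfolding K_def by blast
    note mc = mix_convex[OF 1(2) 2(2) kk(3,4), of w1 w2]
    show ?thesis unfolding K_def 1(1) 2(1)
      apply (rule CollectI)
      apply (rule exI[of _ "F1 \<union> F2"])
      apply (rule exI[of _ "\<lambda>x. (1-s) * (if x \<in> F1 then w1 x else 0) + s * (if x \<in> F2 then w2 x else 0)"])
      using mc 1 2 by auto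
  qed
  have bnd: "(\<Sum>\<alpha>\<in>I. (k \<alpha>)^2) \<le> real (card I)" if kK: "k \<in> K" for k
  proof -
    obtain F w where 1: "k = mixvec F w" "finite F" "F \<subseteq> S" "\<forall>x\<in>F. 0 \<le> w x" "sum w F = 1"
      using kK unfolding K_def by blast
    have "\<bar>k \<alpha>\<bar> \<le> 1" for \<alpha> unfolding 1(1) using 1 Scube by (intro mix_bound) auto
    then have "(k \<alpha>)^2 \<le> 1" for \<alpha> by (simp only: abs_square_le_1)
    then have "(\<Sum>\<alpha>\<in>I. (k \<alpha>)^2) \<le> (\<Sum>\<alpha>\<in>I. 1)" by (intro sum_mono) auto
    then show ?thesis by simp
  qed
  have far: "d \<le> sqrt (\<Sum>\<alpha>\<in>I. (b \<alpha> - k \<alpha>)^2)" if kK: "k \<in> K" for k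
  proof -
    obtain F w where 1: "k = mixvec F w" "finite F" "F \<subseteq> S" "\<forall>x\<in>F. 0 \<le> w x" "sum w F = 1"
      using kK unfolding K_def by blast
    obtain \<mu> where mu: "prob_space \<mu>" "sets \<mu> = sets borel" "AE x in \<mu>. x \<in> semialg gs"
      "\<forall>\<alpha>. integral\<^sup>L \<mu> (mon_eval \<alpha>) = mixvec F w \<alpha>"
      using mix_moment[of F gs w] 1 by (auto simp: S_def)
    have "truncv (2*t) (\<lambda>\<alpha>. integral\<^sup>L \<mu> (mon_eval \<alpha>)) \<in> moments gs (2*t)"
      unfolding moments_def using mu by blast
    then have "d \<le> vdist (2*t) b (truncv (2*t) (\<lambda>\<alpha>. integral\<^sup>L \<mu> (mon_eval \<alpha>)))" by (rule far_mom)
    also have "\<dots> = sqrt (\<Sum>\<alpha>\<in>I. (b \<alpha> - k \<alpha>)^2)"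
      unfolding vdist_def I_def using mu(4) 1(1)
      by (intro arg_cong[where f=sqrt] sum.cong) (auto simp: truncv_def idx_def)
    finally show ?thesis .
  qed
  define e where "e = (\<epsilon> + d) / 2"
  have e: "0 < e" "e < d" "\<epsilon> < e" using ed eps by (auto simp: e_def)
  obtain f where f1: "(\<Sum>\<alpha>\<in>I. (f \<alpha>)^2) \<le> 1"
    and f2: "\<forall>k\<in>K. e \<le> (\<Sum>\<alpha>\<in>I. f \<alpha> * k \<alpha>) - (\<Sum>\<alpha>\<in>I. f \<alpha> * b \<alpha>)"
    using separation[OF finI Kne conv bnd far e(1,2)] by blast
  define P :: "'n rpoly" where "P = Abs_poly_mapping (\<lambda>\<alpha>. if \<alpha> \<in> I then f \<alpha> else 0)"
  have lkP: "Poly_Mapping.lookup P = (\<lambda>\<alpha>. if \<alpha> \<in> I then f \<alpha> else 0)"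
    unfolding P_def by (rule lookup_Abs_poly_mapping) (use finI in \<open>auto intro: finite_subset\<close>)
  have keysP: "Poly_Mapping.keys P \<subseteq> I" by (auto simp: in_keys_iff lkP split: if_splits)
  have evP: "peval P x = (\<Sum>\<alpha>\<in>I. f \<alpha> * mon_eval \<alpha> x)" for x
    using keys_finite_sum[OF finI keysP] by (simp add: lkP)
  define \<sigma> where "\<sigma> = (\<Sum>\<alpha>\<in>I. \<bar>f \<alpha>\<bar>)"
  have sig0: "0 \<le> \<sigma>" by (simp add: \<sigma>_def sum_nonneg)
  have Pbound: "\<bar>peval P x\<bar> \<le> \<sigma>" if "x \<in> cube" for x
  proof -
    have "\<bar>peval P x\<bar> \<le> (\<Sum>\<alpha>\<in>I. \<bar>f \<alpha> * mon_eval \<alpha> x\<bar>)" unfolding evP by (rule sum_abs)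
    also have "\<dots> \<le> \<sigma>" unfolding \<sigma>_def
      using mon_bound[OF that] by (intro sum_mono) (auto simp: abs_mult intro: mult_left_le)
    finally show ?thesis .
  qed
  define B where "B = real ((CARD('n) + t) choose t)"
  have B3: "B \<ge> 3"
  proof -
    have "(CARD('n) + t) choose t \<ge> CARD('n) + 1" by (rule binom_ge[OF t1])
    then show ?thesis using n2 unfolding B_def by linarith
  qed
  have sigB: "\<sigma> \<le> B"
  proof -
    have "\<sigma>^2 \<le> (\<Sum>\<alpha>\<in>I. \<bar>f \<alpha>\<bar>^2) * card I"
      unfolding \<sigma>_def by (rule sum_squared_le_sum_of_squares)
    also have "\<dots> \<le> 1 * real (card I)" using f1 by (intro mult_right_mono) auto
    also have "\<dots> \<le> B^2" using card_idx2[of t, where 'n='n] by (simp add: B_def I_def)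
    finally have "\<sigma>^2 \<le> B^2" .
    then show ?thesis using B3 by (simp add: power2_le_iff_abs_le)
  qed
  have Plo: "-\<sigma> \<le> peval P x" if "x \<in> S" for x
    using Pbound[OF Scube[OF that]] by linarith
  have bddP: "bdd_below ((\<lambda>x. peval P x) ` S)"
    using Plo by (intro bdd_belowI2[where m="-\<sigma>"]) auto
  define m where "m = fstar gs P"
  have m_def': "m = (INF x\<in>S. peval P x)" by (simp add: m_def fstar_def S_def)
  have m_le: "m \<le> peval P x" if "x \<in> S" for x
    unfolding m_def' by (rule cINF_lower[OF bddP that])
  have m_hi: "m \<le> \<sigma>" using m_le[OF x0] Pbound[OF Scube[OF x0]] by (simp add: abs_le_iff)
  have m_lo: "-\<sigma> \<le> m"
    unfolding m_def' using Sne Plo by (intro cINF_greatest) (auto simp: S_def)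
  have fb: "(\<Sum>\<alpha>\<in>I. f \<alpha> * b \<alpha>) + e \<le> peval P x" if x: "x \<in> S" for x
  proof -
    have "e \<le> (\<Sum>\<alpha>\<in>I. f \<alpha> * mixvec {x} (\<lambda>_. 1) \<alpha>) - (\<Sum>\<alpha>\<in>I. f \<alpha> * b \<alpha>)"
      using f2 dirac[OF x] by blast
    moreover have "(\<Sum>\<alpha>\<in>I. f \<alpha> * mixvec {x} (\<lambda>_. 1) \<alpha>) = peval P x"
      by (simp add: evP mixvec_def)
    ultimately show ?thesis by simp
  qed
  have fbm: "(\<Sum>\<alpha>\<in>I. f \<alpha> * b \<alpha>) + e \<le> m"
    unfolding m_def' using Sne fb by (intro cINF_greatest) (auto simp: S_def)
  define c0 where "c0 = m - \<epsilon>"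
  define h where "h = P - Poly_Mapping.single 0 c0"
  have evh: "peval h x = peval P x - c0" for x
    by (simp add: h_def peval_diff)
  have hS: "peval h x \<ge> \<epsilon>" if "x \<in> S" for x
    using m_le[OF that] by (simp add: evh c0_def)
  have fsh: "fstar gs h \<ge> \<epsilon>"
    unfolding fstar_def using Sne hS by (intro cINF_greatest) (auto simp: S_def)
  define U where "U = 2*\<sigma> + \<epsilon>"
  have hbound: "\<bar>peval h x\<bar> \<le> U" if "x \<in> cube" for x
    using Pbound[OF that] m_hi m_lo eps by (simp add: evh c0_def U_def abs_le_iff)
  have cube_ne: "(cube :: (real^'n) set) \<noteq> {}" using Scube[OF x0] by auto
  have bddh: "bdd_above ((\<lambda>x. \<bar>peval h x\<bar>) ` cube)"
    using hbound by (intro bdd_aboveI2[where M=U]) auto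
  have sn_hi: "supnorm h \<le> U"
    unfolding supnorm_def using cube_ne hbound by (intro cSUP_least) auto
  have sn_lo: "supnorm h \<ge> \<epsilon>"
    unfolding supnorm_def using hS[OF x0] eps
    by (intro cSUP_upper2[OF bddh Scube[OF x0]]) auto
  have eps_h: "\<epsilon> / U \<le> epsf gs h"
  proof -
    have "\<epsilon> / U \<le> \<epsilon> / supnorm h" using sn_hi sn_lo eps by (intro divide_left_mono) auto
    also have "\<dots> \<le> fstar gs h / supnorm h" using fsh sn_lo eps by (intro divide_right_mono) auto
    finally show ?thesis by (simp add: epsf_def)
  qed
  have lkh: "Poly_Mapping.lookup h \<alpha> = (if \<alpha> \<in> I then f \<alpha> else 0) - (if \<alpha> = 0 then c0 else 0)" for \<alpha>
    by (simp add: h_def lookup_minus lkP lookup_single when_def)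
  have keysh: "Poly_Mapping.keys h \<subseteq> I"
    by (auto simp: in_keys_iff lkh I_def split: if_splits)
  have pdh: "pdeg h \<le> 2*t" by (rule pdeg_le) (use keysh in \<open>simp add: I_def\<close>)
  have "real l \<ge> \<gamma> * real (pdeg h) powr (7/2 * CARD('n) * LL) * epsf gs h powr (-(5/2) * CARD('n) * LL)"
  proof (rule arith_final[where \<epsilon>=\<epsilon> and \<sigma>=\<sigma> and B=B and t="real t"])
    show "real CARD('n) \<ge> 2" using n2 by simp
    show "0 \<le> real (pdeg h)" by simp
    show "real (pdeg h) \<le> 2 * real t" using pdh by simp
    show "\<epsilon> / (2 * \<sigma> + \<epsilon>) \<le> epsf gs h" using eps_h by (simp add: U_def)
    show "real t \<ge> 1" using t1 by simp
    show "real l \<ge> \<gamma> * 6 powr (5/2 * real CARD('n) * LL) * real t powr (6 * real CARD('n) * LL) *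
      B powr (5/2 * real CARD('n) * LL) * \<epsilon> powr (-(5/2) * real CARD('n) * LL)"
      using l_big by (simp add: B_def)
  qed (use LL1 gam1 eps B3 sig0 sigB in auto)
  moreover have "fstar gs h > 0" using fsh eps by simp
  ultimately have hQ: "h \<in> quadmod l gs" using putinar by blast
  have "apply_fun L h \<ge> 0" using L hQ by (auto simp: pseudo_def)
  moreover have "apply_fun L h = (\<Sum>\<alpha>\<in>I. f \<alpha> * b \<alpha>) - c0"
  proof -
    have "apply_fun L h = (\<Sum>\<alpha>\<in>I. Poly_Mapping.lookup h \<alpha> * L \<alpha>)"
      by (rule apply_fun_sum[OF finI keysh])
    also have "\<dots> = (\<Sum>\<alpha>\<in>I. f \<alpha> * b \<alpha> - (if \<alpha> = 0 then c0 * L \<alpha> else 0))"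
      by (intro sum.cong) (auto simp: lkh bI algebra_simps)
    also have "\<dots> = (\<Sum>\<alpha>\<in>I. f \<alpha> * b \<alpha>) - c0 * L 0"
      using finI by (simp add: sum_subtractf I_def)
    also have "L 0 = 1" using L by (simp add: pseudo_def)
    finally show ?thesis by simp
  qed
  ultimately show False using fbm e by (simp add: c0_def)
qed

theorem mainTheorem2:
  fixes gs :: "'n::finite rpoly list"
    and l0 :: nat and c LL \<gamma> \<epsilon> :: real and t l :: nat
  assumes n2: "CARD('n) \<ge> 2"
    and Sne: "semialg gs \<noteq> {}"
    and gnorm: "\<forall>g\<in>set gs. supnorm g \<le> 1/2"
    and arch: "1 - sqnormX \<in> quadmod l0 gs"
    and c1: "c \<ge> 1" and LL1: "LL \<ge> 1"
    and loj: "\<forall>x\<in>cube. Dfun gs x powr LL \<le> c * Gfun gs x"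
    and gam1: "\<gamma> \<ge> 1"
    and putinar: "\<forall>f::'n rpoly. \<forall>m::nat. fstar gs f > 0 \<longrightarrow>
        real m \<ge> \<gamma> * real (pdeg f) powr (7/2 * CARD('n) * LL) * epsf gs f powr (-(5/2) * CARD('n) * LL)
        \<longrightarrow> f \<in> quadmod m gs"
    and eps: "0 < \<epsilon>" "\<epsilon> \<le> 1/2"
    and t1: "t \<ge> 1"
    and l_big: "real l \<ge> \<gamma> * 6 powr (5/2 * CARD('n) * LL) * real t powr (6 * CARD('n) * LL)
        * real ((CARD('n) + t) choose t) powr (5/2 * CARD('n) * LL) * \<epsilon> powr (-(5/2) * CARD('n) * LL)"
    and l_big2: "l \<ge> 2 * t + l0"
  shows "hausd (2*t) (moments gs (2*t)) (truncv (2*t) ` pseudo gs l) \<le> ereal \<epsilon>"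
  proof -
  have kl: "2*t \<le> l" using l_big2 by simp
  have A: "(SUP a\<in>moments gs (2*t). INF b\<in>truncv (2*t) ` pseudo gs l. ereal (vdist (2*t) a b)) \<le> ereal \<epsilon>"
    by (rule partA[OF arch kl]) (use eps in simp)
  have B: "(SUP b\<in>truncv (2*t) ` pseudo gs l. INF a\<in>moments gs (2*t). ereal (vdist (2*t) b a)) \<le> ereal \<epsilon>"
  proof (rule SUP_least)
    fix b assume "b \<in> truncv (2*t) ` pseudo gs l"
    then obtain L where L: "L \<in> pseudo gs l" and b: "b = truncv (2*t) L" by blast
    show "(INF a\<in>moments gs (2*t). ereal (vdist (2*t) b a)) \<le> ereal \<epsilon>"
      unfolding b by (rule partB[OF n2 Sne arch LL1 gam1 putinar eps t1 l_big L])
  qed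
  show ?thesis unfolding hausd_def using A B by (rule max.boundedI)
qed

end
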